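(* Let $X_1,X_2$ be locally compact Hausdorff spaces, $\mathcal{A}_i\subset\mathcal{C}_c(X_i)$ subalgebras and $N_i$ uniform norms on $\mathcal{A}_i$. For all Borel probability measures $\eta_1,m_1$ on $X_1$ and $\eta_2,m_2$ on $X_2$, \[ \mathrm{dist}_{N_1\otimes N_2}(\eta_1\otimes\eta_2,m_1\otimes m_2)\ll\max(\mathrm{dist}_{N_1}(\eta_1,m_1),\mathrm{dist}_{N_2}(\eta_2,m_2)), \] where the implied constant depends only on $N_1$ and $N_2$.
   Context: A norm $N$ on $\mathcal{A}\subset\mathcal{C}_c(X)$ is uniform if $\|\phi\|_\infty\le F\,N(\phi)$ for some $F$ and all $\phi$. $\mathrm{dist}_N(\mu,\nu)=\sup\{|\mu(\phi)-\nu(\phi)|:\phi\in\mathcal{A},N(\phi)\le1\}$. $N_1\otimes N_2$ is the projective tensor norm on the algebraic tensor product $\mathcal{A}_1\otimes\mathcal{A}_2\subset\mathcal{C}_c(X_1\times X_2)$: $(N_1\otimes N_2)(\phi)=\inf\sum_iN_1(\phi_{1i})N_2(\phi_{2i})$ over representations $\phi=\sum_i\phi_{1i}\otimes\phi_{2i}$. *)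

theory Defs
  imports "HOL-Analysis.Analysis" "HOL-Probability.Probability"
begin

definition Cc :: "('a::topological_space \<Rightarrow> real) set" where
  "Cc = {f. continuous_on UNIV f \<and> compact (closure {x. f x \<noteq> 0})}"

definition subalgebra_Cc :: "('a::topological_space \<Rightarrow> real) set \<Rightarrow> bool" where
  "subalgebra_Cc A \<longleftrightarrow> A \<subseteq> Cc \<and> (\<lambda>x. 0) \<in> A \<and>
     (\<forall>f\<in>A. \<forall>g\<in>A. (\<lambda>x. f x + g x) \<in> A \<and> (\<lambda>x. f x * g x) \<in> A) \<and>
     (\<forall>c::real. \<forall>f\<in>A. (\<lambda>x. c * f x) \<in> A)"

definition is_norm_on :: "('a \<Rightarrow> real) set \<Rightarrow> (('a \<Rightarrow> real) \<Rightarrow> real) \<Rightarrow> bool" where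
  "is_norm_on A N \<longleftrightarrow>
     (\<forall>f\<in>A. N f \<ge> 0) \<and> (\<forall>f\<in>A. N f = 0 \<longleftrightarrow> f = (\<lambda>x. 0)) \<and>
     (\<forall>c::real. \<forall>f\<in>A. N (\<lambda>x. c * f x) = \<bar>c\<bar> * N f) \<and>
     (\<forall>f\<in>A. \<forall>g\<in>A. N (\<lambda>x. f x + g x) \<le> N f + N g)"

definition uniform_norm :: "('a \<Rightarrow> real) set \<Rightarrow> (('a \<Rightarrow> real) \<Rightarrow> real) \<Rightarrow> bool" where
  "uniform_norm A N \<longleftrightarrow> is_norm_on A N \<and>
     (\<exists>F. \<forall>f\<in>A. \<forall>x. \<bar>f x\<bar> \<le> F * N f)"

definition dist_N :: "('a \<Rightarrow> real) set \<Rightarrow> (('a \<Rightarrow> real) \<Rightarrow> real) \<Rightarrow> 'a measure \<Rightarrow> 'a measure \<Rightarrow> real" where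
  "dist_N A N \<mu> \<nu> = Sup {\<bar>(\<integral>x. \<phi> x \<partial>\<mu>) - (\<integral>x. \<phi> x \<partial>\<nu>)\<bar> | \<phi>. \<phi> \<in> A \<and> N \<phi> \<le> 1}"

text \<open>A representation of a function on X1 x X2 as a finite sum of elementary tensors,
  given as a list of pairs (phi_1i, phi_2i).\<close>
definition tensor_fun :: "(('a \<Rightarrow> real) \<times> ('b \<Rightarrow> real)) list \<Rightarrow> ('a \<times> 'b \<Rightarrow> real)" where
  "tensor_fun rs = (\<lambda>(x, y). (\<Sum>r\<leftarrow>rs. fst r x * snd r y))"

definition tensor_reps :: "('a \<Rightarrow> real) set \<Rightarrow> ('b \<Rightarrow> real) set \<Rightarrow> ('a \<times> 'b \<Rightarrow> real)
    \<Rightarrow> (('a \<Rightarrow> real) \<times> ('b \<Rightarrow> real)) list set" where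
  "tensor_reps A1 A2 \<phi> = {rs. set rs \<subseteq> A1 \<times> A2 \<and> tensor_fun rs = \<phi>}"

text \<open>Algebraic tensor product A1 \<otimes> A2, as a space of functions on X1 x X2.\<close>
definition tensor_space :: "('a \<Rightarrow> real) set \<Rightarrow> ('b \<Rightarrow> real) set \<Rightarrow> ('a \<times> 'b \<Rightarrow> real) set" where
  "tensor_space A1 A2 = {\<phi>. tensor_reps A1 A2 \<phi> \<noteq> {}}"

definition proj_tensor_norm :: "('a \<Rightarrow> real) set \<Rightarrow> ('b \<Rightarrow> real) set \<Rightarrow> (('a \<Rightarrow> real) \<Rightarrow> real)
    \<Rightarrow> (('b \<Rightarrow> real) \<Rightarrow> real) \<Rightarrow> ('a \<times> 'b \<Rightarrow> real) \<Rightarrow> real" where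
  "proj_tensor_norm A1 A2 N1 N2 \<phi> =
     Inf {(\<Sum>r\<leftarrow>rs. N1 (fst r) * N2 (snd r)) | rs. rs \<in> tensor_reps A1 A2 \<phi>}"

definition borel_prob :: "'a::topological_space measure \<Rightarrow> bool" where
  "borel_prob M \<longleftrightarrow> sets M = sets borel \<and> prob_space M"

end

theory Submission
  imports Defs
begin

lemma prod_int:
  fixes f :: "'a \<Rightarrow> real" and g :: "'b \<Rightarrow> real"
  assumes P1: "prob_space M1" and P2: "prob_space M2"
    and fm: "f \<in> borel_measurable M1" and gm: "g \<in> borel_measurable M2"
    and fb: "\<And>x. \<bar>f x\<bar> \<le> B1" and gb: "\<And>y. \<bar>g y\<bar> \<le> B2"
  shows "integrable (M1 \<Otimes>\<^sub>M M2) (\<lambda>(x,y). f x * g y)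
     \<and> (\<integral>p. (\<lambda>(x,y). f x * g y) p \<partial>(M1 \<Otimes>\<^sub>M M2)) = (\<integral>x. f x \<partial>M1) * (\<integral>y. g y \<partial>M2)"
proof -
  interpret p1: prob_space M1 by fact
  interpret p2: prob_space M2 by fact
  interpret pair_prob_space M1 M2 by unfold_locales
  have int: "integrable (M1 \<Otimes>\<^sub>M M2) (\<lambda>(x,y). f x * g y)"
  proof (rule integrable_const_bound[where B="B1*B2"])
    show "AE x in M1 \<Otimes>\<^sub>M M2. norm ((\<lambda>(x,y). f x * g y) x) \<le> B1 * B2"
    proof (rule AE_I2)
      fix p :: "'a \<times> 'b"
      obtain x y where p: "p = (x,y)" by (cases p)
      have "\<bar>f x\<bar> * \<bar>g y\<bar> \<le> B1 * B2"
        using fb[of x] gb[of y] by (intro mult_mono) (auto intro: order_trans[OF abs_ge_zero])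
      then show "norm ((\<lambda>(x,y). f x * g y) p) \<le> B1 * B2" by (simp add: p abs_mult)
    qed
    show "(\<lambda>(x,y). f x * g y) \<in> borel_measurable (M1 \<Otimes>\<^sub>M M2)"
      using fm gm by measurable
  qed
  have "(\<integral>p. (\<lambda>(x,y). f x * g y) p \<partial>(M1 \<Otimes>\<^sub>M M2)) = (\<integral>x. (\<integral>y. f x * g y \<partial>M2) \<partial>M1)"
    using integral_fst[of "\<lambda>x y. f x * g y"] int by simp
  also have "\<dots> = (\<integral>x. f x * (\<integral>y. g y \<partial>M2) \<partial>M1)" by simp
  also have "\<dots> = (\<integral>x. f x \<partial>M1) * (\<integral>y. g y \<partial>M2)" by simp
  finally show ?thesis using int by simp
qed

lemma A_meas:
  assumes "subalgebra_Cc A" "f \<in> A" "sets M = sets borel"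
  shows "f \<in> borel_measurable M"
proof -
  have "continuous_on UNIV f" using assms(1,2) by (auto simp: subalgebra_Cc_def Cc_def)
  then have "f \<in> borel_measurable borel" by (rule borel_measurable_continuous_onI)
  then show ?thesis using measurable_cong_sets[OF assms(3) refl, of borel] by blast
qed

lemma A_int:
  assumes "subalgebra_Cc A" "f \<in> A" "borel_prob M" "\<And>x. \<bar>f x\<bar> \<le> B"
  shows "integrable M f \<and> \<bar>\<integral>x. f x \<partial>M\<bar> \<le> B"
proof -
  interpret prob_space M using assms(3) by (simp add: borel_prob_def)
  have m: "f \<in> borel_measurable M" using A_meas assms by (auto simp: borel_prob_def)
  have i: "integrable M f" by (rule integrable_const_bound[where B=B]) (use assms(4) m in auto)
  have "\<bar>\<integral>x. f x \<partial>M\<bar> \<le> (\<integral>x. \<bar>f x\<bar> \<partial>M)" by (rule integral_abs_bound)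
  also have "\<dots> \<le> (\<integral>x. B \<partial>M)" using i assms(4) by (intro integral_mono) auto
  also have "\<dots> = B" by (simp add: prob_space)
  finally show ?thesis using i by simp
qed

lemma dist_facts:
  fixes A :: "('a::topological_space \<Rightarrow> real) set"
  assumes sub: "subalgebra_Cc A" and nrm: "is_norm_on A N" and F: "\<And>f x. f \<in> A \<Longrightarrow> \<bar>f x\<bar> \<le> F * N f"
    and F0: "F \<ge> 0" and mu: "borel_prob \<mu>" and nu: "borel_prob \<nu>"
  shows "dist_N A N \<mu> \<nu> \<ge> 0"
    and "\<And>f. f \<in> A \<Longrightarrow> \<bar>(\<integral>x. f x \<partial>\<mu>) - (\<integral>x. f x \<partial>\<nu>)\<bar> \<le> dist_N A N \<mu> \<nu> * N f"
proof -
  let ?S = "{\<bar>(\<integral>x. \<phi> x \<partial>\<mu>) - (\<integral>x. \<phi> x \<partial>\<nu>)\<bar> | \<phi>. \<phi> \<in> A \<and> N \<phi> \<le> 1}"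
  have z: "(\<lambda>x. 0) \<in> A" using sub by (simp add: subalgebra_Cc_def)
  have N0: "N (\<lambda>x. 0) = 0" using nrm z by (simp add: is_norm_on_def)
  have bdd: "bdd_above ?S"
  proof (rule bdd_aboveI[where M="2*F"])
    fix y assume "y \<in> ?S"
    then obtain \<phi> where y: "y = \<bar>(\<integral>x. \<phi> x \<partial>\<mu>) - (\<integral>x. \<phi> x \<partial>\<nu>)\<bar>" and p: "\<phi> \<in> A" "N \<phi> \<le> 1" by auto
    have b: "\<bar>\<phi> x\<bar> \<le> F" for x using F[OF p(1), of x] p(2) F0
      by (smt (verit) mult_left_mono mult.commute mult_cancel_left1)
    have "\<bar>\<integral>x. \<phi> x \<partial>\<mu>\<bar> \<le> F" "\<bar>\<integral>x. \<phi> x \<partial>\<nu>\<bar> \<le> F"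
      using A_int[OF sub p(1) mu b] A_int[OF sub p(1) nu b] by auto
    then show "y \<le> 2*F" unfolding y by linarith
  qed
  have inS: "0 \<in> ?S" using z N0 by force
  show d0: "dist_N A N \<mu> \<nu> \<ge> 0" unfolding dist_N_def by (rule cSup_upper2[OF inS _ bdd]) simp
  fix f assume f: "f \<in> A"
  show "\<bar>(\<integral>x. f x \<partial>\<mu>) - (\<integral>x. f x \<partial>\<nu>)\<bar> \<le> dist_N A N \<mu> \<nu> * N f"
  proof (cases "N f = 0")
    case True
    then have "f = (\<lambda>x. 0)" using nrm f by (simp add: is_norm_on_def)
    then show ?thesis using True by simp
  next
    case False
    have "N f \<ge> 0" using nrm f by (simp add: is_norm_on_def)
    then have Nf: "N f > 0" using False by simp
    define c where "c = 1 / N f"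
    have cf: "(\<lambda>x. c * f x) \<in> A" using sub f by (simp add: subalgebra_Cc_def)
    have "N (\<lambda>x. c * f x) = \<bar>c\<bar> * N f" using nrm f unfolding is_norm_on_def by blast
    then have Ncf: "N (\<lambda>x. c * f x) = 1" using Nf by (simp add: c_def)
    have "\<bar>(\<integral>x. c * f x \<partial>\<mu>) - (\<integral>x. c * f x \<partial>\<nu>)\<bar> \<in> ?S" using cf Ncf by force
    then have "\<bar>(\<integral>x. c * f x \<partial>\<mu>) - (\<integral>x. c * f x \<partial>\<nu>)\<bar> \<le> dist_N A N \<mu> \<nu>"
      unfolding dist_N_def by (rule cSup_upper[OF _ bdd])
    then have "c * \<bar>(\<integral>x. f x \<partial>\<mu>) - (\<integral>x. f x \<partial>\<nu>)\<bar> \<le> dist_N A N \<mu> \<nu>"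
      using Nf by (simp add: c_def diff_divide_distrib[symmetric])
    then show ?thesis using Nf by (simp add: c_def field_simps)
  qed
qed

lemma tensor_fun_Cons:
  "tensor_fun (r # rs) = (\<lambda>p. (\<lambda>(x,y). fst r x * snd r y) p + tensor_fun rs p)"
  by (auto simp: tensor_fun_def fun_eq_iff)

lemma tensor_fun_Nil: "tensor_fun [] = (\<lambda>p. 0)"
  by (auto simp: tensor_fun_def fun_eq_iff)

lemma single_bound:
  fixes a a' b b' d1 d2 G1 G2 n1 n2 :: real
  assumes "\<bar>a - a'\<bar> \<le> d1 * n1" "\<bar>b - b'\<bar> \<le> d2 * n2" "\<bar>b\<bar> \<le> G2 * n2" "\<bar>a'\<bar> \<le> G1 * n1"
    "d1 \<ge> 0" "d2 \<ge> 0" "G1 \<ge> 0" "G2 \<ge> 0" "n1 \<ge> 0" "n2 \<ge> 0"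
  shows "\<bar>a * b - a' * b'\<bar> \<le> (G1 + G2) * max d1 d2 * (n1 * n2)"
proof -
  have "a * b - a' * b' = (a - a') * b + a' * (b - b')" by (simp add: algebra_simps)
  then have "\<bar>a * b - a' * b'\<bar> \<le> \<bar>a - a'\<bar> * \<bar>b\<bar> + \<bar>a'\<bar> * \<bar>b - b'\<bar>"
    by (metis abs_mult abs_triangle_ineq)
  also have "\<dots> \<le> (d1 * n1) * (G2 * n2) + (G1 * n1) * (d2 * n2)"
    using assms by (intro add_mono mult_mono) auto
  also have "\<dots> \<le> (max d1 d2 * n1) * (G2 * n2) + (G1 * n1) * (max d1 d2 * n2)"
    using assms by (intro add_mono mult_mono) auto
  also have "\<dots> = (G1 + G2) * max d1 d2 * (n1 * n2)" by (simp add: algebra_simps)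
  finally show ?thesis .
qed

lemma tensor_bound:
  fixes A1 :: "('a::topological_space \<Rightarrow> real) set" and A2 :: "('b::topological_space \<Rightarrow> real) set"
  assumes sub1: "subalgebra_Cc A1" and sub2: "subalgebra_Cc A2"
    and nrm1: "is_norm_on A1 N1" and nrm2: "is_norm_on A2 N2"
    and F1: "\<And>f x. f \<in> A1 \<Longrightarrow> \<bar>f x\<bar> \<le> G1 * N1 f" and G1: "G1 \<ge> 0"
    and F2: "\<And>f x. f \<in> A2 \<Longrightarrow> \<bar>f x\<bar> \<le> G2 * N2 f" and G2: "G2 \<ge> 0"
    and e1: "borel_prob \<eta>1" and p1: "borel_prob m1" and e2: "borel_prob \<eta>2" and p2: "borel_prob m2"
  shows "set rs \<subseteq> A1 \<times> A2 \<Longrightarrow> integrable (\<eta>1 \<Otimes>\<^sub>M \<eta>2) (tensor_fun rs) \<and> integrable (m1 \<Otimes>\<^sub>M m2) (tensor_fun rs) \<and>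
    \<bar>(\<integral>p. tensor_fun rs p \<partial>(\<eta>1 \<Otimes>\<^sub>M \<eta>2)) - (\<integral>p. tensor_fun rs p \<partial>(m1 \<Otimes>\<^sub>M m2))\<bar>
      \<le> (G1 + G2) * max (dist_N A1 N1 \<eta>1 m1) (dist_N A2 N2 \<eta>2 m2) * (\<Sum>r\<leftarrow>rs. N1 (fst r) * N2 (snd r))"
proof (induction rs)
  case Nil
  then show ?case by (simp add: tensor_fun_Nil)
next
  case (Cons r rs)
  obtain f g where r: "r = (f, g)" by (cases r)
  have f: "f \<in> A1" and g: "g \<in> A2" using Cons.prems r by auto
  have IH: "integrable (\<eta>1 \<Otimes>\<^sub>M \<eta>2) (tensor_fun rs) \<and> integrable (m1 \<Otimes>\<^sub>M m2) (tensor_fun rs) \<and>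
    \<bar>(\<integral>p. tensor_fun rs p \<partial>(\<eta>1 \<Otimes>\<^sub>M \<eta>2)) - (\<integral>p. tensor_fun rs p \<partial>(m1 \<Otimes>\<^sub>M m2))\<bar>
      \<le> (G1 + G2) * max (dist_N A1 N1 \<eta>1 m1) (dist_N A2 N2 \<eta>2 m2) * (\<Sum>r\<leftarrow>rs. N1 (fst r) * N2 (snd r))"
    using Cons by auto
  have fb: "\<And>x. \<bar>f x\<bar> \<le> G1 * N1 f" using F1 f by blast
  have gb: "\<And>x. \<bar>g x\<bar> \<le> G2 * N2 g" using F2 g by blast
  have fm: "f \<in> borel_measurable \<eta>1" "f \<in> borel_measurable m1"
    using A_meas[OF sub1 f] e1 p1 by (auto simp: borel_prob_def)
  have gm: "g \<in> borel_measurable \<eta>2" "g \<in> borel_measurable m2"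
    using A_meas[OF sub2 g] e2 p2 by (auto simp: borel_prob_def)
  have Pe: "integrable (\<eta>1 \<Otimes>\<^sub>M \<eta>2) (\<lambda>(x,y). f x * g y)
     \<and> (\<integral>p. (\<lambda>(x,y). f x * g y) p \<partial>(\<eta>1 \<Otimes>\<^sub>M \<eta>2)) = (\<integral>x. f x \<partial>\<eta>1) * (\<integral>y. g y \<partial>\<eta>2)"
    by (rule prod_int[OF _ _ fm(1) gm(1) fb gb]) (use e1 e2 in \<open>auto simp: borel_prob_def\<close>)
  have Pm: "integrable (m1 \<Otimes>\<^sub>M m2) (\<lambda>(x,y). f x * g y)
     \<and> (\<integral>p. (\<lambda>(x,y). f x * g y) p \<partial>(m1 \<Otimes>\<^sub>M m2)) = (\<integral>x. f x \<partial>m1) * (\<integral>y. g y \<partial>m2)"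
    by (rule prod_int[OF _ _ fm(2) gm(2) fb gb]) (use p1 p2 in \<open>auto simp: borel_prob_def\<close>)
  have d1: "\<bar>(\<integral>x. f x \<partial>\<eta>1) - (\<integral>x. f x \<partial>m1)\<bar> \<le> dist_N A1 N1 \<eta>1 m1 * N1 f"
    and d10: "dist_N A1 N1 \<eta>1 m1 \<ge> 0"
    using dist_facts[OF sub1 nrm1 F1 G1 e1 p1] f by auto
  have d2: "\<bar>(\<integral>x. g x \<partial>\<eta>2) - (\<integral>x. g x \<partial>m2)\<bar> \<le> dist_N A2 N2 \<eta>2 m2 * N2 g"
    and d20: "dist_N A2 N2 \<eta>2 m2 \<ge> 0"
    using dist_facts[OF sub2 nrm2 F2 G2 e2 p2] g by auto
  have b1: "\<bar>\<integral>x. f x \<partial>m1\<bar> \<le> G1 * N1 f" using A_int[OF sub1 f p1 fb] by blast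
  have b2: "\<bar>\<integral>x. g x \<partial>\<eta>2\<bar> \<le> G2 * N2 g" using A_int[OF sub2 g e2 gb] by blast
  have n1: "N1 f \<ge> 0" using nrm1 f by (simp add: is_norm_on_def)
  have n2: "N2 g \<ge> 0" using nrm2 g by (simp add: is_norm_on_def)
  have sb: "\<bar>(\<integral>x. f x \<partial>\<eta>1) * (\<integral>y. g y \<partial>\<eta>2) - (\<integral>x. f x \<partial>m1) * (\<integral>y. g y \<partial>m2)\<bar>
     \<le> (G1 + G2) * max (dist_N A1 N1 \<eta>1 m1) (dist_N A2 N2 \<eta>2 m2) * (N1 f * N2 g)"
    by (rule single_bound[OF d1 d2 b2 b1 d10 d20 G1 G2 n1 n2])
  show ?case
    unfolding tensor_fun_Cons r
    using Pe Pm IH sb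
    by (simp add: Bochner_Integration.integral_add algebra_simps) linarith
qed

theorem lemma7p9:
  fixes A1 :: "('a::t2_space \<Rightarrow> real) set" and A2 :: "('b::t2_space \<Rightarrow> real) set"
    and N1 :: "('a \<Rightarrow> real) \<Rightarrow> real" and N2 :: "('b \<Rightarrow> real) \<Rightarrow> real"
  assumes "locally_compact_space (euclidean :: 'a topology)"
    and "locally_compact_space (euclidean :: 'b topology)"
    and "subalgebra_Cc A1" and "subalgebra_Cc A2"
    and "uniform_norm A1 N1" and "uniform_norm A2 N2"
  shows "\<exists>C. \<forall>\<eta>1 m1 \<eta>2 m2. borel_prob \<eta>1 \<longrightarrow> borel_prob m1 \<longrightarrow> borel_prob \<eta>2 \<longrightarrow> borel_prob m2 \<longrightarrow>
     dist_N (tensor_space A1 A2) (proj_tensor_norm A1 A2 N1 N2) (\<eta>1 \<Otimes>\<^sub>M \<eta>2) (m1 \<Otimes>\<^sub>M m2)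
       \<le> C * max (dist_N A1 N1 \<eta>1 m1) (dist_N A2 N2 \<eta>2 m2)"
proof -
  note sub1 = assms(3) and sub2 = assms(4)
  have nrm1: "is_norm_on A1 N1" and nrm2: "is_norm_on A2 N2" using assms(5,6) by (auto simp: uniform_norm_def)
  obtain F1 where F1: "\<forall>f\<in>A1. \<forall>x. \<bar>f x\<bar> \<le> F1 * N1 f" using assms(5) by (auto simp: uniform_norm_def)
  obtain F2 where F2: "\<forall>f\<in>A2. \<forall>x. \<bar>f x\<bar> \<le> F2 * N2 f" using assms(6) by (auto simp: uniform_norm_def)
  define G1 where "G1 = max F1 0"
  define G2 where "G2 = max F2 0"
  have G1: "G1 \<ge> 0" and G2: "G2 \<ge> 0" by (auto simp: G1_def G2_def)
  have H1: "\<And>f x. f \<in> A1 \<Longrightarrow> \<bar>f x\<bar> \<le> G1 * N1 f"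
  proof -
    fix f x assume f: "f \<in> A1"
    have "N1 f \<ge> 0" using nrm1 f by (simp add: is_norm_on_def)
    then have "F1 * N1 f \<le> G1 * N1 f" by (intro mult_right_mono) (auto simp: G1_def)
    then show "\<bar>f x\<bar> \<le> G1 * N1 f" using F1 f by (meson order_trans)
  qed
  have H2: "\<And>f x. f \<in> A2 \<Longrightarrow> \<bar>f x\<bar> \<le> G2 * N2 f"
  proof -
    fix f x assume f: "f \<in> A2"
    have "N2 f \<ge> 0" using nrm2 f by (simp add: is_norm_on_def)
    then have "F2 * N2 f \<le> G2 * N2 f" by (intro mult_right_mono) (auto simp: G2_def)
    then show "\<bar>f x\<bar> \<le> G2 * N2 f" using F2 f by (meson order_trans)
  qed
  show ?thesis
  proof (intro exI[of _ "G1 + G2"] allI impI)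
    fix \<eta>1 m1 :: "'a measure" and \<eta>2 m2 :: "'b measure"
    assume e1: "borel_prob \<eta>1" and p1: "borel_prob m1" and e2: "borel_prob \<eta>2" and p2: "borel_prob m2"
    define K where "K = (G1 + G2) * max (dist_N A1 N1 \<eta>1 m1) (dist_N A2 N2 \<eta>2 m2)"
    have d10: "dist_N A1 N1 \<eta>1 m1 \<ge> 0" using dist_facts(1)[OF sub1 nrm1 H1 G1 e1 p1] .
    have K0: "K \<ge> 0" unfolding K_def using G1 G2 d10 by auto
    let ?N = "proj_tensor_norm A1 A2 N1 N2"
    let ?S = "{\<bar>(\<integral>x. \<phi> x \<partial>(\<eta>1 \<Otimes>\<^sub>M \<eta>2)) - (\<integral>x. \<phi> x \<partial>(m1 \<Otimes>\<^sub>M m2))\<bar> | \<phi>. \<phi> \<in> tensor_space A1 A2 \<and> ?N \<phi> \<le> 1}"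
    have Tsum0: "(\<Sum>r\<leftarrow>rs. N1 (fst r) * N2 (snd r)) \<ge> 0" if "set rs \<subseteq> A1 \<times> A2" for rs
      using that
    proof (induction rs)
      case Nil then show ?case by simp
    next
      case (Cons r rs)
      then have "N1 (fst r) \<ge> 0" "N2 (snd r) \<ge> 0" using nrm1 nrm2 by (auto simp: is_norm_on_def)
      then show ?case using Cons by simp
    qed
    have key: "\<bar>(\<integral>x. \<phi> x \<partial>(\<eta>1 \<Otimes>\<^sub>M \<eta>2)) - (\<integral>x. \<phi> x \<partial>(m1 \<Otimes>\<^sub>M m2))\<bar> \<le> K * ?N \<phi>"
      if "\<phi> \<in> tensor_space A1 A2" for \<phi>
    proof -
      let ?D = "\<bar>(\<integral>x. \<phi> x \<partial>(\<eta>1 \<Otimes>\<^sub>M \<eta>2)) - (\<integral>x. \<phi> x \<partial>(m1 \<Otimes>\<^sub>M m2))\<bar>"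
      let ?T = "{(\<Sum>r\<leftarrow>rs. N1 (fst r) * N2 (snd r)) | rs. rs \<in> tensor_reps A1 A2 \<phi>}"
      have each: "?D \<le> K * t" if "t \<in> ?T" for t
      proof -
        obtain rs where t: "t = (\<Sum>r\<leftarrow>rs. N1 (fst r) * N2 (snd r))" and rs: "set rs \<subseteq> A1 \<times> A2" "tensor_fun rs = \<phi>"
          using \<open>t \<in> ?T\<close> by (auto simp: tensor_reps_def)
        show ?thesis using tensor_bound[OF sub1 sub2 nrm1 nrm2 H1 G1 H2 G2 e1 p1 e2 p2 rs(1)] rs(2) t
          by (simp add: K_def)
      qed
      have ne: "?T \<noteq> {}" using that by (auto simp: tensor_space_def)
      show ?thesis
      proof (cases "K = 0")
        case True
        obtain t where "t \<in> ?T" using ne by blast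
        then have "?D \<le> 0" using each True by fastforce
        then show ?thesis using True by simp
      next
        case False
        then have Kp: "K > 0" using K0 by simp
        have "?D / K \<le> Inf ?T"
        proof (rule cInf_greatest[OF ne])
          fix t assume "t \<in> ?T"
          then show "?D / K \<le> t" using each[of t] Kp by (simp add: divide_le_eq mult.commute)
        qed
        then show ?thesis using Kp by (simp add: proj_tensor_norm_def divide_le_eq mult.commute)
      qed
    qed
    have zero: "(\<lambda>p. 0) \<in> tensor_space A1 A2"
      using tensor_fun_Nil by (force simp: tensor_space_def tensor_reps_def)
    have "?N (\<lambda>p. 0) \<le> 0"
    proof -
      have "(0::real) \<in> {(\<Sum>r\<leftarrow>rs. N1 (fst r) * N2 (snd r)) | rs. rs \<in> tensor_reps A1 A2 (\<lambda>p. 0)}"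
        using tensor_fun_Nil by (force simp: tensor_reps_def)
      moreover have "bdd_below {(\<Sum>r\<leftarrow>rs. N1 (fst r) * N2 (snd r)) | rs. rs \<in> tensor_reps A1 A2 (\<lambda>p. 0)}"
        by (rule bdd_belowI[where m=0]) (auto simp: tensor_reps_def intro: Tsum0)
      ultimately show ?thesis unfolding proj_tensor_norm_def by (rule cInf_lower)
    qed
    then have "?S \<noteq> {}" using zero by force
    then have "Sup ?S \<le> K"
    proof (rule cSup_least)
      fix y assume "y \<in> ?S"
      then obtain \<phi> where y: "y = \<bar>(\<integral>x. \<phi> x \<partial>(\<eta>1 \<Otimes>\<^sub>M \<eta>2)) - (\<integral>x. \<phi> x \<partial>(m1 \<Otimes>\<^sub>M m2))\<bar>"
        and ph: "\<phi> \<in> tensor_space A1 A2" "?N \<phi> \<le> 1" by blast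
      have "K * ?N \<phi> \<le> K * 1" using K0 ph(2) by (intro mult_left_mono) auto
      then show "y \<le> K" using key[OF ph(1)] y by simp
    qed
    then show "dist_N (tensor_space A1 A2) ?N (\<eta>1 \<Otimes>\<^sub>M \<eta>2) (m1 \<Otimes>\<^sub>M m2)
       \<le> (G1 + G2) * max (dist_N A1 N1 \<eta>1 m1) (dist_N A2 N2 \<eta>2 m2)"
      unfolding dist_N_def K_def .
  qed
qed

end
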